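(* Under the standing assumptions (H), for every fixed $\delta>0$, with $z(x)=\frac1a(\sqrt{2ax}+\delta\sqrt x)$, \[ \mathbf{P}\Big(A_\tau>x,\ \overline X_\tau\in\Big[y(x),\sqrt{2ax}-\tfrac{h(x)}{\log x}\Big],\ J_{\ge2},\ \tau\le z(x)\Big)=o\big(\overline F(\sqrt{2ax})\big),\qquad x\to\infty. \]
   Context: Standing assumptions (H): $X_1,X_2,\dots$ i.i.d. with $\mathbf{E}X_1=-a<0$, $\mathrm{Var}(X_1)<\infty$, $\overline F(x)=\mathbf{P}(X_1>x)\sim e^{-g(x)}x^{-2}$ as $x\to\infty$, where $g:(0,\infty)\to\mathbb{R}$ is continuously differentiable, nondecreasing for all large $x$, $x\mapsto g(x)/x^{\gamma_0}$ is nonincreasing on $(0,\infty)$ with limit $0$ for some $\gamma_0\in(0,1/2)$, and $xg'(x)\to\infty$. Notation: $S_0=0$, $S_n=X_1+\dots+X_n$, $\tau=\min\{n\ge1:S_n\le0\}$, $A_\tau=\sum_{k=0}^{\tau-1}S_k$, $\overline X_\tau=\max(X_1,\dots,X_\tau)$, $h(x)=\sqrt{2ax}/g(\sqrt{2ax})$, $y(x)=\sqrt{2ax}-C_0h(x)\log x$ for a fixed constant $C_0>\frac{5/4}{1-\gamma_0}$. $J_{\ge2}$ is the event that there exist two distinct indices $k,l\in\{1,\dots,\tau\}$ with $X_k>y(x)$ and $X_l>y(x)$. *)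

theory Defs
  imports "HOL-Probability.Probability" "HOL-Library.Landau_Symbols"
begin

text \<open>Random walk S_n = X_1 + ... + X_n (the sequence X is indexed from 1; X 0 is unused).\<close>
definition rw_S :: "(nat \<Rightarrow> 'a \<Rightarrow> real) \<Rightarrow> nat \<Rightarrow> 'a \<Rightarrow> real" where
  "rw_S X n \<omega> = (\<Sum>k\<in>{1..n}. X k \<omega>)"

definition Fbar :: "'a measure \<Rightarrow> (nat \<Rightarrow> 'a \<Rightarrow> real) \<Rightarrow> real \<Rightarrow> real" where
  "Fbar M X t = measure M {\<omega> \<in> space M. X 1 \<omega> > t}"

text \<open>tau(omega) = n, i.e. n = min{m >= 1 : S_m <= 0}.\<close>
definition tau_eq :: "(nat \<Rightarrow> 'a \<Rightarrow> real) \<Rightarrow> 'a \<Rightarrow> nat \<Rightarrow> bool" where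
  "tau_eq X \<omega> n \<longleftrightarrow> n \<ge> 1 \<and> rw_S X n \<omega> \<le> 0 \<and> (\<forall>m. 1 \<le> m \<and> m < n \<longrightarrow> rw_S X m \<omega> > 0)"

definition standing_H ::
  "'a measure \<Rightarrow> (nat \<Rightarrow> 'a \<Rightarrow> real) \<Rightarrow> real \<Rightarrow> (real \<Rightarrow> real) \<Rightarrow> real \<Rightarrow> bool" where
  "standing_H M X a g \<gamma>0 \<longleftrightarrow>
     prob_space M \<and>
     (\<forall>k\<ge>1. X k \<in> borel_measurable M) \<and>
     prob_space.indep_vars M (\<lambda>_. borel) X {1..} \<and>
     (\<forall>k\<ge>1. distr M borel (X k) = distr M borel (X 1)) \<and>
     a > 0 \<and> integrable M (X 1) \<and> integral\<^sup>L M (X 1) = - a \<and>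
     integrable M (\<lambda>\<omega>. (X 1 \<omega>)\<^sup>2) \<and>
     (Fbar M X \<sim>[at_top] (\<lambda>x. exp (- g x) * x powr (-2))) \<and>
     (\<forall>x>0. g differentiable (at x)) \<and> continuous_on {0<..} (deriv g) \<and>
     (\<exists>x0. \<forall>x y. x0 \<le> x \<and> x \<le> y \<longrightarrow> g x \<le> g y) \<and>
     0 < \<gamma>0 \<and> \<gamma>0 < 1/2 \<and>
     (\<forall>x y. 0 < x \<and> x \<le> y \<longrightarrow> g y / y powr \<gamma>0 \<le> g x / x powr \<gamma>0) \<and>
     ((\<lambda>x. g x / x powr \<gamma>0) \<longlongrightarrow> 0) at_top \<and>
     filterlim (\<lambda>x. x * deriv g x) at_top at_top"

definition h_fun :: "real \<Rightarrow> (real \<Rightarrow> real) \<Rightarrow> real \<Rightarrow> real" where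
  "h_fun a g x = sqrt (2 * a * x) / g (sqrt (2 * a * x))"

definition y_fun :: "real \<Rightarrow> (real \<Rightarrow> real) \<Rightarrow> real \<Rightarrow> real \<Rightarrow> real" where
  "y_fun a g C0 x = sqrt (2 * a * x) - C0 * h_fun a g x * ln x"

definition event11 ::
  "'a measure \<Rightarrow> (nat \<Rightarrow> 'a \<Rightarrow> real) \<Rightarrow> real \<Rightarrow> (real \<Rightarrow> real) \<Rightarrow> real \<Rightarrow> real \<Rightarrow> real \<Rightarrow> 'a set" where
  "event11 M X a g C0 \<delta> x = {\<omega> \<in> space M. \<exists>n. tau_eq X \<omega> n \<and>
      (\<Sum>k<n. rw_S X k \<omega>) > x \<and>
      y_fun a g C0 x \<le> Max ((\<lambda>k. X k \<omega>) ` {1..n}) \<and>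
      Max ((\<lambda>k. X k \<omega>) ` {1..n}) \<le> sqrt (2 * a * x) - h_fun a g x / ln x \<and>
      (\<exists>k l. k \<in> {1..n} \<and> l \<in> {1..n} \<and> k \<noteq> l \<and> X k \<omega> > y_fun a g C0 x \<and> X l \<omega> > y_fun a g C0 x) \<and>
      real n \<le> (sqrt (2 * a * x) + \<delta> * sqrt x) / a}"

end

theory Submission
  imports Defs
begin


lemma pair_prob:
  assumes P: "prob_space M" and meas: "\<forall>k\<ge>1. X k \<in> borel_measurable M"
    and ind: "prob_space.indep_vars M (\<lambda>_. borel) X {1..}"
    and dis: "\<forall>k\<ge>1. distr M borel (X k) = distr M borel (X 1)"
    and k: "k \<ge> 1" and l: "l \<ge> 1" and kl: "k \<noteq> l"
  shows "measure M {\<omega>\<in>space M. X k \<omega> > t \<and> X l \<omega> > t} = Fbar M X t ^ 2"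
proof -
  interpret prob_space M by fact
  have single: "measure M (X j -` {t<..} \<inter> space M) = Fbar M X t" if "j \<ge> 1" for j
  proof -
    have Xj: "X j \<in> borel_measurable M" using meas that by simp
    have X1: "X 1 \<in> borel_measurable M" using meas by simp
    have "measure M (X j -` {t<..} \<inter> space M) = measure (distr M borel (X j)) {t<..}"
      using measure_distr[OF Xj, of "{t<..}"] by simp
    also have "\<dots> = measure (distr M borel (X 1)) {t<..}"
    proof -
      have dj: "distr M borel (X j) = distr M borel (X 1)" using dis that by blast
      show ?thesis by (simp only: dj)
    qed
    also have "\<dots> = measure M (X 1 -` {t<..} \<inter> space M)"
      using measure_distr[OF X1, of "{t<..}"] by simp
    also have "\<dots> = Fbar M X t" unfolding Fbar_def by (rule arg_cong[where f="measure M"]) auto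
    finally show ?thesis .
  qed
  have "prob (\<Inter>i\<in>{k,l}. X i -` {t<..} \<inter> space M) = (\<Prod>i\<in>{k,l}. prob (X i -` {t<..} \<inter> space M))"
    by (rule indep_varsD[OF ind]) (use k l in auto)
  also have "\<dots> = Fbar M X t ^ 2" using kl single k l by (simp add: power2_eq_square)
  also have "(\<Inter>i\<in>{k,l}. X i -` {t<..} \<inter> space M) = {\<omega>\<in>space M. X k \<omega> > t \<and> X l \<omega> > t}" by auto
  finally show ?thesis .
qed

lemma union_bound:
  assumes P: "prob_space M" and meas: "\<forall>k\<ge>1. X k \<in> borel_measurable M"
    and ind: "prob_space.indep_vars M (\<lambda>_. borel) X {1..}"
    and dis: "\<forall>k\<ge>1. distr M borel (X k) = distr M borel (X 1)"
    and E: "E \<subseteq> {\<omega>\<in>space M. \<exists>k l. k \<in> {1..N} \<and> l \<in> {1..N} \<and> k \<noteq> l \<and> X k \<omega> > t \<and> X l \<omega> > t}"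
  shows "measure M E \<le> real N ^ 2 * Fbar M X t ^ 2"
proof -
  interpret prob_space M by fact
  define Pr where "Pr = {(k,l). k \<in> {1..N} \<and> l \<in> {1..N} \<and> k \<noteq> l}"
  define A where "A = (\<lambda>(k,l). {\<omega>\<in>space M. X k \<omega> > t \<and> X l \<omega> > t})"
  have finP: "finite Pr" unfolding Pr_def
    by (rule finite_subset[of _ "{1..N} \<times> {1..N}"]) auto
  have cardP: "card Pr \<le> N ^ 2"
  proof -
    have "card Pr \<le> card ({1..N} \<times> {1..N})"
      by (rule card_mono) (auto simp: Pr_def)
    thus ?thesis by (simp add: card_cartesian_product power2_eq_square)
  qed
  have Asets: "A p \<in> sets M" if pP: "p \<in> Pr" for p
  proof -
    obtain k l where p: "p = (k,l)" "k \<ge> 1" "l \<ge> 1" using pP unfolding Pr_def by (cases p) auto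
    have [measurable]: "X k \<in> borel_measurable M" "X l \<in> borel_measurable M" using meas p by auto
    show ?thesis unfolding A_def p by simp measurable
  qed
  have EA: "E \<subseteq> (\<Union>p\<in>Pr. A p)"
  proof
    fix w assume "w \<in> E"
    then obtain k l where "w \<in> space M" "k \<in> {1..N}" "l \<in> {1..N}" "k \<noteq> l" "X k w > t" "X l w > t" using E by blast
    hence "(k,l) \<in> Pr" "w \<in> A (k,l)" unfolding Pr_def A_def by auto
    thus "w \<in> (\<Union>p\<in>Pr. A p)" by blast
  qed
  have Aval: "measure M (A p) = Fbar M X t ^ 2" if "p \<in> Pr" for p
    using that pair_prob[OF P meas ind dis] unfolding A_def Pr_def by (auto split: prod.splits)
  have nn: "0 \<le> Fbar M X t" unfolding Fbar_def by simp
  show ?thesis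
  proof (cases "E \<in> sets M")
    case False
    thus ?thesis using nn by (simp add: measure_notin_sets)
  next
    case True
    have "measure M E \<le> measure M (\<Union>p\<in>Pr. A p)"
      using EA Asets finP by (intro finite_measure_mono) auto
    also have "\<dots> \<le> (\<Sum>p\<in>Pr. measure M (A p))"
      using Asets finP by (intro finite_measure_subadditive_finite) auto
    also have "\<dots> = real (card Pr) * Fbar M X t ^ 2" using Aval by simp
    also have "\<dots> \<le> real N ^ 2 * Fbar M X t ^ 2"
      using cardP nn by (intro mult_right_mono) (auto simp flip: of_nat_power)
    finally show ?thesis .
  qed
qed


lemma g_over_ln:
  fixes g :: "real \<Rightarrow> real"
  assumes diff: "\<forall>x>0. g differentiable (at x)"
    and lim: "filterlim (\<lambda>x. x * deriv g x) at_top at_top"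
  shows "filterlim (\<lambda>t. g t / ln t) at_top at_top"
  unfolding filterlim_at_top
proof
  fix K :: real
  define K' where "K' = max K 0 + 1"
  have K'pos: "K' > 0" and KK: "K \<le> K'" unfolding K'_def by auto
  have "eventually (\<lambda>x. 2 * K' \<le> x * deriv g x) at_top"
    using lim by (simp add: filterlim_at_top)
  then obtain t0 where t0: "\<And>x. x \<ge> t0 \<Longrightarrow> 2 * K' \<le> x * deriv g x"
    by (auto simp: eventually_at_top_linorder)
  define t1 where "t1 = max t0 2"
  have t1: "t1 \<ge> t0" "t1 \<ge> 2" unfolding t1_def by auto
  define c where "c = g t1 - 2 * K' * ln t1"
  have mono: "g t - 2 * K' * ln t \<ge> c" if "t \<ge> t1" for t
  proof -
    have "(\<lambda>u. g u - 2 * K' * ln u) t1 \<le> (\<lambda>u. g u - 2 * K' * ln u) t"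
    proof (rule DERIV_nonneg_imp_nondecreasing[OF that])
      fix u assume u: "t1 \<le> u" "u \<le> t"
      hence upos: "u > 0" using t1 by auto
      have dg: "(g has_real_derivative deriv g u) (at u)"
        using diff upos DERIV_deriv_iff_real_differentiable by blast
      have "((\<lambda>u. g u - 2 * K' * ln u) has_real_derivative deriv g u - 2 * K' * (1 / u)) (at u)"
        using upos by (auto intro!: derivative_eq_intros dg)
      moreover have "deriv g u - 2 * K' * (1 / u) \<ge> 0"
      proof -
        have "2 * K' \<le> u * deriv g u" using t0 u t1 by auto
        hence "2 * K' / u \<le> deriv g u" using upos by (simp add: divide_simps mult.commute)
        thus ?thesis by simp
      qed
      ultimately show "\<exists>y. ((\<lambda>u. g u - 2 * K' * ln u) has_real_derivative y) (at u) \<and> 0 \<le> y" by blast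
    qed
    thus ?thesis unfolding c_def by simp
  qed
  show "eventually (\<lambda>t. K \<le> g t / ln t) at_top"
    unfolding eventually_at_top_linorder
  proof (intro exI[of _ "max t1 (exp (\<bar>c\<bar> / K' + 1))"] allI impI)
    fix t assume "t \<ge> max t1 (exp (\<bar>c\<bar> / K' + 1))"
    hence tt: "t \<ge> t1" "t \<ge> exp (\<bar>c\<bar> / K' + 1)" by auto
    have tpos: "t > 0" using tt t1 by auto
    have "ln t \<ge> \<bar>c\<bar> / K' + 1" using tt(2) tpos
      by (metis exp_gt_zero ln_exp ln_le_cancel_iff)
    hence lnt: "K' * ln t \<ge> \<bar>c\<bar> + K'" using K'pos by (simp add: field_simps)
    have lnpos: "ln t > 0" using lnt K'pos
      by (smt (verit, ccfv_SIG) mult_nonneg_nonpos abs_ge_zero)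
    have "g t \<ge> 2 * K' * ln t + c" using mono[OF tt(1)] by simp
    moreover have "2 * K' * ln t = K' * ln t + K' * ln t" by simp
    moreover have "- \<bar>c\<bar> \<le> c" by simp
    ultimately have "g t \<ge> K' * ln t" using lnt K'pos by linarith
    hence "g t / ln t \<ge> K'" using lnpos by (simp add: divide_simps)
    thus "K \<le> g t / ln t" using KK by linarith
  qed
qed


lemma powr_m2: "(t::real) > 0 \<Longrightarrow> t powr (-2) = 1 / t^2"
  by (simp add: powr_minus powr_numeral divide_inverse)

lemma chain:
  fixes s y z c1 gs gy Fy Fs m :: real and N :: nat
  assumes s: "s > 0" and y: "y \<ge> 3/4 * s" and zc: "z = c1 * s" and c1: "c1 > 0"
    and gg: "gy \<ge> 3/4 * gs" and Fy: "Fy \<le> 2 * (exp (- gy) / y^2)" "Fy \<ge> 0"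
    and Fs: "Fs \<ge> exp (- gs) / s^2 / 2"
    and m: "m \<le> real N ^ 2 * Fy ^ 2" and N: "real N \<le> z"
  shows "m \<le> 26 * c1^2 * exp (- gs / 2) * Fs"
proof -
  have ypos: "y > 0" using s y by linarith
  have N2: "real N ^ 2 \<le> z ^ 2" using N by (intro power_mono) auto
  have Fy2: "Fy ^ 2 \<le> (2 * (exp (- gy) / y^2))^2" using Fy by (intro power_mono) auto
  also have "\<dots> = 4 * exp (- 2 * gy) / y^4"
    by (simp add: power2_eq_square power4_eq_xxxx field_simps flip: exp_add)
  also have "\<dots> \<le> 4 * (exp (- gs) * exp (- gs / 2)) / y^4"
  proof -
    have "exp (- 2 * gy) \<le> exp (- gs - gs / 2)" using gg by simp
    also have "exp (- gs - gs / 2) = exp (- gs) * exp (- gs / 2)" by (simp add: mult_exp_exp)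
    finally have "4 * exp (- 2 * gy) \<le> 4 * (exp (- gs) * exp (- gs / 2))" by simp
    thus ?thesis using ypos by (intro divide_right_mono) auto
  qed
  also have "\<dots> \<le> 4 * (2 * Fs * s^2 * exp (- gs / 2)) / y^4"
  proof -
    have "exp (- gs) \<le> 2 * Fs * s^2" using Fs s by (simp add: field_simps)
    hence "exp (- gs) * exp (- gs / 2) \<le> 2 * Fs * s^2 * exp (- gs / 2)"
      by (intro mult_right_mono) auto
    thus ?thesis using ypos by (intro divide_right_mono) auto
  qed
  also have "\<dots> \<le> 4 * (2 * Fs * s^2 * exp (- gs / 2)) * (256/81) / s^4"
  proof -
    have Fsnn: "Fs \<ge> 0" using Fs s by (smt (verit) divide_nonneg_nonneg exp_ge_zero zero_le_power2)
    have "(3/4 * s)^4 \<le> y^4" using y s by (intro power_mono) auto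
    hence "1 / y^4 \<le> 1 / (3/4 * s)^4" using s ypos by (intro divide_left_mono) auto
    also have "\<dots> = (256/81) / s^4" by (simp add: power_divide power_mult_distrib)
    finally have "1 / y^4 \<le> (256/81) / s^4" .
    hence "4 * (2 * Fs * s^2 * exp (- gs / 2)) * (1 / y^4) \<le> 4 * (2 * Fs * s^2 * exp (- gs / 2)) * ((256/81) / s^4)"
      using Fsnn by (intro mult_left_mono) auto
    thus ?thesis by simp
  qed
  finally have Fy2b: "Fy ^ 2 \<le> 4 * (2 * Fs * s^2 * exp (- gs / 2)) * (256/81) / s^4" .
  have "m \<le> z^2 * (4 * (2 * Fs * s^2 * exp (- gs / 2)) * (256/81) / s^4)"
    using m N2 Fy2b by (smt (verit) mult_mono zero_le_power2 of_nat_0_le_iff zero_le_power)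
  also have "\<dots> = c1^2 * (8 * 256 / 81) * exp (- gs / 2) * Fs"
    using s unfolding zc by (simp add: field_simps power2_eq_square power4_eq_xxxx)
  also have "\<dots> \<le> 26 * c1^2 * exp (- gs / 2) * Fs"
  proof -
    have Fsnn: "Fs \<ge> 0" using Fs s by (smt (verit) divide_nonneg_nonneg exp_ge_zero zero_le_power2)
    show ?thesis using Fsnn by (intro mult_right_mono) auto
  qed
  finally show ?thesis .
qed


lemma good_point:
  fixes x a C0 \<gamma> s :: real and g :: "real \<Rightarrow> real"
  assumes x: "x > 1" and a: "a > 0" and C0: "C0 > 0" and \<gamma>: "0 < \<gamma>" "\<gamma> < 1"
    and ratio: "\<forall>x y. 0 < x \<and> x \<le> y \<longrightarrow> g y / y powr \<gamma> \<le> g x / x powr \<gamma>"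
    and s: "s = sqrt (2 * a * x)" and gs: "g s \<ge> (12 * C0 + 1) * ln s"
    and ls: "ln s \<ge> \<bar>ln (2 * a)\<bar> + 1"
  shows "s > 0 \<and> g s > 0 \<and> y_fun a g C0 x \<ge> 3/4 * s \<and> y_fun a g C0 x \<le> s \<and>
         g (y_fun a g C0 x) \<ge> 3/4 * g s"
proof -
  have spos: "s > 0" using s x a by simp
  have lspos: "ln s > 0" using ls by (smt (verit) abs_ge_zero)
  have gspos: "g s > 0" using gs lspos C0
    by (smt (verit) mult_pos_pos)
  have s2: "s^2 = 2 * a * x" using s x a by simp
  have lnx: "ln x = 2 * ln s - ln (2 * a)"
  proof -
    have "ln (s^2) = ln (2 * a) + ln x" using s2 x a by (simp add: ln_mult)
    moreover have "ln (s^2) = 2 * ln s" using spos by (simp add: ln_realpow)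
    ultimately show ?thesis by simp
  qed
  have lnxpos: "ln x > 0" using x by simp
  have lnx3: "ln x \<le> 3 * ln s" using lnx ls by (smt (verit) abs_ge_self abs_minus_cancel abs_ge_zero)
  have r: "C0 * ln x / g s \<le> 1/4"
  proof -
    have "C0 * ln x \<le> 3 * C0 * ln s" using mult_left_mono[OF lnx3, of C0] C0 by simp
    also have "\<dots> \<le> g s / 4"
    proof -
      have "12 * C0 * ln s \<le> (12 * C0 + 1) * ln s" using lspos by (simp add: distrib_right)
      thus ?thesis using gs by linarith
    qed
    finally show ?thesis using gspos by (simp add: divide_simps)
  qed
  have r0: "C0 * ln x / g s \<ge> 0" using C0 lnxpos gspos by simp
  have yeq: "y_fun a g C0 x = s * (1 - C0 * ln x / g s)"
    unfolding y_fun_def h_fun_def s[symmetric] by (simp add: field_simps)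
  have y1: "y_fun a g C0 x \<ge> 3/4 * s"
  proof -
    have "s * (3/4) \<le> s * (1 - C0 * ln x / g s)" using r spos by (intro mult_left_mono) auto
    thus ?thesis unfolding yeq by simp
  qed
  have y2: "y_fun a g C0 x \<le> s"
  proof -
    have "s * (1 - C0 * ln x / g s) \<le> s * 1" using r0 spos by (intro mult_left_mono) auto
    thus ?thesis unfolding yeq by simp
  qed
  define y where "y = y_fun a g C0 x"
  have ypos: "y > 0" using y1 spos unfolding y_def by linarith
  have "g s / s powr \<gamma> \<le> g y / y powr \<gamma>" using ratio ypos y2 unfolding y_def by blast
  hence "g y \<ge> g s * (y powr \<gamma> / s powr \<gamma>)" using ypos spos
    by (simp add: divide_simps mult.commute)
  also have "y powr \<gamma> / s powr \<gamma> = (y / s) powr \<gamma>" by (simp add: powr_divide ypos spos less_imp_le)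
  finally have gy: "g y \<ge> g s * (y / s) powr \<gamma>" .
  have q1: "y / s \<ge> 3/4" using y1 spos unfolding y_def by (simp add: divide_simps)
  have "(3/4::real) \<le> (3/4) powr \<gamma>"
    using powr_mono'[of \<gamma> 1 "3/4::real"] \<gamma> by simp
  also have "(3/4::real) powr \<gamma> \<le> (y / s) powr \<gamma>" using q1 \<gamma> by (intro powr_mono2) auto
  finally have "g s * (3/4) \<le> g s * (y / s) powr \<gamma>" using gspos by simp
  with gy have "g y \<ge> 3/4 * g s" by simp
  thus ?thesis using spos gspos y1 y2 unfolding y_def by simp
qed
theorem mainTheorem11:
  fixes M :: "'a measure" and X :: "nat \<Rightarrow> 'a \<Rightarrow> real"
    and a \<gamma>0 C0 \<delta> :: real and g :: "real \<Rightarrow> real"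
  assumes "standing_H M X a g \<gamma>0"
    and "C0 > (5/4) / (1 - \<gamma>0)"
    and "\<delta> > 0"
  shows "(\<lambda>x. measure M (event11 M X a g C0 \<delta> x)) \<in> o[at_top](\<lambda>x. Fbar M X (sqrt (2 * a * x)))"
proof -
  note H = assms(1)[unfolded standing_H_def]
  have P: "prob_space M" and meas: "\<forall>k\<ge>1. X k \<in> borel_measurable M"
    and ind: "prob_space.indep_vars M (\<lambda>_. borel) X {1..}"
    and dis: "\<forall>k\<ge>1. distr M borel (X k) = distr M borel (X 1)"
    and a: "a > 0"
    and asy: "Fbar M X \<sim>[at_top] (\<lambda>x. exp (- g x) * x powr (-2))"
    and diff: "\<forall>x>0. g differentiable (at x)"
    and \<gamma>: "0 < \<gamma>0" "\<gamma>0 < 1/2"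
    and ratio: "\<forall>x y. 0 < x \<and> x \<le> y \<longrightarrow> g y / y powr \<gamma>0 \<le> g x / x powr \<gamma>0"
    and lim: "filterlim (\<lambda>x. x * deriv g x) at_top at_top"
    using H by blast+
  have C0: "C0 > 0"
  proof -
    have "(5/4) / (1 - \<gamma>0) > 0" using \<gamma> by simp
    thus ?thesis using assms(2) by linarith
  qed
  define s where "s = (\<lambda>x::real. sqrt (2 * a * x))"
  define y where "y = (\<lambda>x. y_fun a g C0 x)"
  define c1 where "c1 = (1 + \<delta> / sqrt (2 * a)) / a"
  have c1: "c1 > 0" unfolding c1_def using a assms(3) by (intro divide_pos_pos add_pos_pos) auto
  define K where "K = 26 * c1^2"
  have Kpos: "K > 0" unfolding K_def using c1 by simp
  have s_lim: "filterlim s at_top at_top"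
    unfolding s_def
    by (rule filterlim_compose[OF sqrt_at_top]
             filterlim_tendsto_pos_mult_at_top[OF tendsto_const _ filterlim_ident])+ (use a in simp)
  have gl: "filterlim (\<lambda>t. g t / ln t) at_top at_top" by (rule g_over_ln[OF diff lim])
  have Fb: "eventually (\<lambda>t. Fbar M X t \<le> 2 * (exp (- g t) / t^2) \<and> Fbar M X t \<ge> exp (- g t) / t^2 / 2) at_top"
  proof -
    have T: "((\<lambda>t. if Fbar M X t = 0 \<and> exp (- g t) * t powr (-2) = 0 then 1 else Fbar M X t / (exp (- g t) * t powr (-2))) \<longlongrightarrow> 1) at_top"
      by (rule asymp_equivD[OF asy])
    have e1: "eventually (\<lambda>t. (if Fbar M X t = 0 \<and> exp (- g t) * t powr (-2) = 0 then 1 else Fbar M X t / (exp (- g t) * t powr (-2))) < 2) at_top"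
      by (rule order_tendstoD(2)[OF T]) simp
    have e2: "eventually (\<lambda>t. (if Fbar M X t = 0 \<and> exp (- g t) * t powr (-2) = 0 then 1 else Fbar M X t / (exp (- g t) * t powr (-2))) > 1/2) at_top"
      by (rule order_tendstoD(1)[OF T]) simp
    have e3: "eventually (\<lambda>t::real. t > 0) at_top" by (rule eventually_gt_at_top)
    show ?thesis
    proof (rule eventually_mono[OF eventually_conj[OF e1 eventually_conj[OF e2 e3]]])
      fix t :: real
      assume A: "(if Fbar M X t = 0 \<and> exp (- g t) * t powr (-2) = 0 then 1 else Fbar M X t / (exp (- g t) * t powr (-2))) < 2 \<and>
        (if Fbar M X t = 0 \<and> exp (- g t) * t powr (-2) = 0 then 1 else Fbar M X t / (exp (- g t) * t powr (-2))) > 1/2 \<and> t > 0"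
      hence tp: "t > 0" by simp
      have ee: "exp (- g t) * t powr (-2) = exp (- g t) / t^2" using powr_m2[OF tp] by simp
      have epos: "exp (- g t) / t^2 > 0" using tp by simp
      from A have "Fbar M X t / (exp (- g t) / t^2) < 2" "Fbar M X t / (exp (- g t) / t^2) > 1/2"
        using epos unfolding ee by (auto split: if_splits)
      thus "Fbar M X t \<le> 2 * (exp (- g t) / t^2) \<and> Fbar M X t \<ge> exp (- g t) / t^2 / 2"
        using epos tp by (simp add: divide_simps)
    qed
  qed
  have good_t: "eventually (\<lambda>t. g t \<ge> (12 * C0 + 1) * ln t \<and> ln t \<ge> \<bar>ln (2 * a)\<bar> + 1) at_top"
  proof -
    have "eventually (\<lambda>t. g t / ln t \<ge> 12 * C0 + 1) at_top" using gl by (simp add: filterlim_at_top)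
    moreover have "eventually (\<lambda>t. ln t \<ge> \<bar>ln (2 * a)\<bar> + 1) at_top"
      using ln_at_top by (simp add: filterlim_at_top)
    ultimately show ?thesis
    proof eventually_elim
      case (elim t)
      hence "ln t > 0" by (smt (verit) abs_ge_zero)
      with elim show ?case by (simp add: divide_simps)
    qed
  qed
  have good: "eventually (\<lambda>x. x > 1 \<and> s x > 0 \<and> g (s x) > 0 \<and> y x \<ge> 3/4 * s x \<and> y x \<le> s x \<and>
         g (y x) \<ge> 3/4 * g (s x)) at_top"
  proof -
    have "eventually (\<lambda>x. g (s x) \<ge> (12 * C0 + 1) * ln (s x) \<and> ln (s x) \<ge> \<bar>ln (2 * a)\<bar> + 1) at_top"
      using filterlim_iff[THEN iffD1, OF s_lim, rule_format, OF good_t] by simp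
    moreover have "eventually (\<lambda>x::real. x > 1) at_top" by (rule eventually_gt_at_top)
    ultimately show ?thesis
    proof eventually_elim
      case (elim x)
      have "s x > 0 \<and> g (s x) > 0 \<and> y_fun a g C0 x \<ge> 3/4 * s x \<and> y_fun a g C0 x \<le> s x \<and>
         g (y_fun a g C0 x) \<ge> 3/4 * g (s x)"
        by (rule good_point[of x a C0 \<gamma>0 g "s x"]) (use elim a C0 \<gamma> ratio s_def in auto)
      thus ?case using elim unfolding y_def by auto
    qed
  qed
  have y_lim: "filterlim y at_top at_top"
  proof (rule filterlim_at_top_mono)
    show "filterlim (\<lambda>x. 3/4 * s x) at_top at_top"
      by (rule filterlim_tendsto_pos_mult_at_top[OF tendsto_const _ s_lim]) simp
    show "eventually (\<lambda>x. 3/4 * s x \<le> y x) at_top" using good by (rule eventually_mono) auto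
  qed
  have Fb1: "eventually (\<lambda>t. Fbar M X t \<ge> exp (- g t) / t^2 / 2) at_top"
    using Fb by (rule eventually_mono) simp
  have Fb2: "eventually (\<lambda>t. Fbar M X t \<le> 2 * (exp (- g t) / t^2)) at_top"
    using Fb by (rule eventually_mono) simp
  have Fs: "eventually (\<lambda>x. Fbar M X (s x) \<ge> exp (- g (s x)) / (s x)^2 / 2) at_top"
    using filterlim_iff[THEN iffD1, OF s_lim, rule_format, OF Fb1] by simp
  have Fy: "eventually (\<lambda>x. Fbar M X (y x) \<le> 2 * (exp (- g (y x)) / (y x)^2)) at_top"
    using filterlim_iff[THEN iffD1, OF y_lim, rule_format, OF Fb2] by simp
  have bound: "eventually (\<lambda>x. measure M (event11 M X a g C0 \<delta> x) \<le> K * exp (- g (s x) / 2) * Fbar M X (s x)) at_top"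
    using good Fs Fy
  proof eventually_elim
    case (elim x)
    define z where "z = (sqrt (2 * a * x) + \<delta> * sqrt x) / a"
    define N where "N = nat \<lfloor>z\<rfloor>"
    have xpos: "x > 0" using elim by simp
    have zc: "z = c1 * s x"
    proof -
      have "sqrt (2 * a * x) = sqrt (2 * a) * sqrt x" by (simp add: real_sqrt_mult)
      moreover have "sqrt (2 * a) > 0" using a by simp
      ultimately show ?thesis unfolding z_def c1_def s_def by (simp add: field_simps)
    qed
    have z0: "z \<ge> 0" using zc c1 elim by simp
    have Nz: "real N \<le> z" unfolding N_def using z0 by linarith
    have sub: "event11 M X a g C0 \<delta> x \<subseteq> {\<omega>\<in>space M. \<exists>k l. k \<in> {1..N} \<and> l \<in> {1..N} \<and> k \<noteq> l \<and> X k \<omega> > y_fun a g C0 x \<and> X l \<omega> > y_fun a g C0 x}"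
    proof
      fix w assume "w \<in> event11 M X a g C0 \<delta> x"
      then obtain n k l where w: "w \<in> space M" "real n \<le> z" "k \<in> {1..n}" "l \<in> {1..n}" "k \<noteq> l"
        "X k w > y_fun a g C0 x" "X l w > y_fun a g C0 x"
        unfolding event11_def z_def by blast
      have nN: "n \<le> N" unfolding N_def using w(2) by (rule le_nat_floor)
      have kl: "k \<in> {1..N}" "l \<in> {1..N}" using w(3,4) nN by auto
      thus "w \<in> {\<omega>\<in>space M. \<exists>k l. k \<in> {1..N} \<and> l \<in> {1..N} \<and> k \<noteq> l \<and> X k \<omega> > y_fun a g C0 x \<and> X l \<omega> > y_fun a g C0 x}"
        using w(1,5,6,7) kl by blast
    qed
    have m: "measure M (event11 M X a g C0 \<delta> x) \<le> real N ^ 2 * Fbar M X (y x) ^ 2"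
      using union_bound[OF P meas ind dis sub] unfolding y_def .
    have Fynn: "Fbar M X (y x) \<ge> 0" unfolding Fbar_def by simp
    show ?case unfolding K_def
      by (rule chain[OF _ _ zc c1 _ _ Fynn _ m Nz]) (use elim in auto)
  qed
  show ?thesis
  proof (rule landau_o.smallI)
    fix c :: real assume c: "c > 0"
    have gs_lim: "filterlim (\<lambda>x. g (s x)) at_top at_top"
    proof (rule filterlim_at_top_mono)
      show "filterlim (\<lambda>x. ln (s x)) at_top at_top" by (rule filterlim_compose[OF ln_at_top s_lim])
      have "eventually (\<lambda>x. g (s x) \<ge> (12 * C0 + 1) * ln (s x) \<and> ln (s x) \<ge> \<bar>ln (2 * a)\<bar> + 1) at_top"
        using filterlim_iff[THEN iffD1, OF s_lim, rule_format, OF good_t] by simp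
      thus "eventually (\<lambda>x. ln (s x) \<le> g (s x)) at_top"
      proof (rule eventually_mono)
        fix x assume A: "g (s x) \<ge> (12 * C0 + 1) * ln (s x) \<and> ln (s x) \<ge> \<bar>ln (2 * a)\<bar> + 1"
        hence "ln (s x) \<ge> 0" by (smt (verit) abs_ge_zero)
        hence "ln (s x) \<le> (12 * C0 + 1) * ln (s x)" using C0 by (simp add: distrib_right)
        thus "ln (s x) \<le> g (s x)" using A by linarith
      qed
    qed
    have ev: "eventually (\<lambda>x. g (s x) \<ge> 2 * \<bar>ln (K / c)\<bar>) at_top"
      using gs_lim by (simp add: filterlim_at_top)
    show "eventually (\<lambda>x. norm (measure M (event11 M X a g C0 \<delta> x)) \<le> c * norm (Fbar M X (sqrt (2 * a * x)))) at_top"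
      using bound ev
    proof eventually_elim
      case (elim x)
      have Fsnn: "Fbar M X (s x) \<ge> 0" unfolding Fbar_def by simp
      have "exp (- g (s x) / 2) \<le> exp (- ln (K / c))" using elim(2) by simp
      also have "\<dots> = c / K" using Kpos c by (simp add: exp_minus)
      finally have "K * exp (- g (s x) / 2) \<le> c" using Kpos by (simp add: field_simps)
      hence "K * exp (- g (s x) / 2) * Fbar M X (s x) \<le> c * Fbar M X (s x)"
        using Fsnn by (intro mult_right_mono)
      with elim(1) show ?case using Fsnn unfolding s_def by simp
    qed
  qed
qed

end
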